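(* Consider searching on a line with turn cost $t$ and lower bound $\lambda>0$. If $\frac{t}{2\lambda}>1$, then every search strategy has competitive ratio strictly greater than $9$.
   Context: Searching on a line with turn cost. Fix $\lambda>0$, $t\ge 0$. A search strategy is a sequence $\mathcal S(i)=(x_i,r_i)$, $i\ge1$, with $x_i>0$, $r_i\in\{\mathrm{left},\mathrm{right}\}$ and $\sup\{x_i:r_i=\mathrm{left}\}=\sup\{x_i:r_i=\mathrm{right}\}=\infty$. At step $i$ the searcher walks distance $x_i$ from the origin along ray $r_i$ and, if the target is not found, walks back to the origin, paying an additional turn cost $t$; thus each unsuccessful step costs $2x_i+t$. The target is on one of the two rays at unknown distance $D\ge\lambda$ and is found at the first step $j$ with $r_j$ equal to its ray and $x_j\ge D$; the total cost is then $\sum_{i=1}^{j-1}(2x_i+t)+D$. The competitive ratio of $\mathcal S$ is the supremum over all target positions of total cost divided by $D$. *)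

theory Defs
  imports "HOL-Analysis.Analysis"
begin

datatype ray = Left | Right

text \<open>A search strategy: step i (for i \<ge> 1) is the pair (x_i, r_i).
  The value at index 0 is ignored.\<close>
type_synonym strategy = "nat \<Rightarrow> real \<times> ray"

definition is_strategy :: "strategy \<Rightarrow> bool" where
  "is_strategy S \<longleftrightarrow>
     (\<forall>i\<ge>1. fst (S i) > 0) \<and>
     (\<forall>r. \<forall>M::real. \<exists>i\<ge>1. snd (S i) = r \<and> fst (S i) > M)"

definition find_step :: "strategy \<Rightarrow> ray \<Rightarrow> real \<Rightarrow> nat" where
  "find_step S r D = (LEAST j. j \<ge> 1 \<and> snd (S j) = r \<and> fst (S j) \<ge> D)"

definition search_cost :: "real \<Rightarrow> strategy \<Rightarrow> ray \<Rightarrow> real \<Rightarrow> real" where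
  "search_cost t S r D = (\<Sum>i\<in>{1..<find_step S r D}. 2 * fst (S i) + t) + D"

definition comp_ratio :: "real \<Rightarrow> real \<Rightarrow> strategy \<Rightarrow> ereal" where
  "comp_ratio lam t S =
     (SUP p \<in> {(r, D). D \<ge> lam}. ereal (search_cost t S (fst p) (snd p) / snd p))"

end

theory Submission
  imports Defs
begin

lemma cost_bound:
  assumes lam: "lam > 0" and t: "t \<ge> 0" and S: "is_strategy S"
    and cr: "comp_ratio lam t S \<le> 9"
    and M: "\<forall>i\<in>{1..k}. snd (S i) = r \<longrightarrow> fst (S i) \<le> M"
  shows "(\<Sum>i\<in>{1..k}. 2 * fst (S i) + t) \<le> 8 * max lam M"
proof -
  let ?T = "(\<Sum>i\<in>{1..k}. 2 * fst (S i) + t)"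
  have "?T / 8 \<le> max lam M"
  proof (rule dense_ge)
    fix D8 assume "max lam M < D8"
    then have D: "D8 > M" "D8 \<ge> lam" "D8 > 0" using lam by auto
    define D where "D = D8"
    from S obtain i where i: "i \<ge> 1" "snd (S i) = r" "fst (S i) > D"
      unfolding is_strategy_def by blast
    define j where "j = find_step S r D"
    have j: "j \<ge> 1 \<and> snd (S j) = r \<and> fst (S j) \<ge> D"
      unfolding j_def find_step_def by (rule LeastI[of _ i]) (use i in auto)
    have kj: "k < j"
    proof (rule ccontr)
      assume "\<not> k < j"
      then have "j \<in> {1..k}" using j by auto
      then have "fst (S j) \<le> M" using M j by auto
      then show False using j D D_def by auto
    qed
    have pos: "\<forall>i\<ge>1. fst (S i) > 0" using S unfolding is_strategy_def by blast
    have "?T \<le> (\<Sum>i\<in>{1..<j}. 2 * fst (S i) + t)"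
      by (rule sum_mono2) (use kj pos t in \<open>auto intro: add_nonneg_nonneg\<close>)
    then have c1: "?T + D \<le> search_cost t S r D"
      unfolding search_cost_def j_def by simp
    have mem: "(r, D) \<in> {(r, D). D \<ge> lam}" using D D_def by auto
    have "ereal (search_cost t S r D / D) \<le> comp_ratio lam t S"
      unfolding comp_ratio_def using SUP_upper[OF mem, of "\<lambda>p. ereal (search_cost t S (fst p) (snd p) / snd p)"]
      by simp
    also note cr
    finally have "search_cost t S r D / D \<le> 9" by simp
    then have "search_cost t S r D \<le> 9 * D" using D D_def by (simp add: divide_simps)
    then show "?T / 8 \<le> D8" using c1 D_def by simp
  qed
  then show ?thesis by simp
qed

lemma ratio_step:
  fixes V X P P' :: real
  assumes "0 < V" "V < X" "X \<le> 2*V - P/2" "P' \<ge> 2*P" "0 < P"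
  shows "P/V < 2 \<and> P'/X \<ge> P/V + (P/V)^2/4"
proof
  have PV: "P < 2*V" using assms by linarith
  then show "P/V < 2" using assms by (simp add: divide_simps)
  have X0: "X > 0" using assms by linarith
  have "P'/X \<ge> 2*P/X" using assms X0 by (simp add: divide_right_mono)
  moreover have "2*P/X \<ge> 2*P/(2*V - P/2)"
    using assms X0 by (intro divide_left_mono) auto
  moreover have "2*P/(2*V - P/2) \<ge> P/V + (P/V)^2/4"
  proof -
    have d: "4*V - P > 0" using PV assms by linarith
    have e: "2*P/(2*V - P/2) = 4*P/(4*V-P)" by (simp add: field_simps)
    have "P/V + (P/V)^2/4 = (4*P*V + P^2)/(4*V^2)" using assms by (simp add: field_simps power2_eq_square)
    also have "\<dots> \<le> 4*P/(4*V-P)"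
    proof -
      have "(4*P*V + P^2) * (4*V-P) \<le> 4*P * (4*V^2)"
      proof -
        have "(4*P*V + P^2) * (4*V-P) = 16*P*V^2 - P^3" by (simp add: algebra_simps power2_eq_square power3_eq_cube)
        moreover have "P^3 > 0" using assms by simp
        ultimately show ?thesis by simp
      qed
      then show ?thesis using d assms by (simp add: divide_simps)
    qed
    finally show ?thesis using e by simp
  qed
  ultimately show "P'/X \<ge> P/V + (P/V)^2/4" by linarith
qed
theorem lemma2:
  fixes lam t :: real and S :: strategy
  assumes "lam > 0" and "t \<ge> 0" and "t / (2 * lam) > 1" and "is_strategy S"
  shows "comp_ratio lam t S > 9"
proof (rule ccontr)
  assume "\<not> comp_ratio lam t S > 9"
  then have cr: "comp_ratio lam t S \<le> 9" by simp
  have lam: "lam > 0" and t0: "t \<ge> 0" and S: "is_strategy S" using assms by auto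
  have tl: "t > 2*lam" using assms(1,3) by (simp add: divide_simps)
  define x where "x = (\<lambda>i. fst (S i))"
  define T where "T = (\<lambda>n. \<Sum>i\<in>{1..n}. 2 * x i + t)"
  define v where "v = rec_nat (0::real) (\<lambda>n a. max a (x (Suc n)))"
  have v0: "v 0 = 0" and vS: "\<And>n. v (Suc n) = max (v n) (x (Suc n))" by (simp_all add: v_def)
  have T0: "T 0 = 0" and TS: "\<And>n. T (Suc n) = T n + 2 * x (Suc n) + t" by (simp_all add: T_def)
  have xpos: "\<And>i. i \<ge> 1 \<Longrightarrow> x i > 0" using S unfolding is_strategy_def x_def by blast
  have Tnn: "T n \<ge> 0" for n
  proof (induction n)
    case (Suc n) then show ?case using TS[of n] xpos[of "Suc n"] t0 by simp
  qed (simp add: T0)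
  have xv: "1 \<le> i \<Longrightarrow> i \<le> n \<Longrightarrow> x i \<le> v n" for i n
  proof (induction n)
    case 0 then show ?case by simp
  next
    case (Suc n) then show ?case by (cases "i = Suc n") (auto simp: vS)
  qed
  have vmono: "m \<le> n \<Longrightarrow> v m \<le> v n" for m n
    by (rule lift_Suc_mono_le[of v]) (auto simp: vS)
  have CB: "T (Suc n) \<le> 8 * max lam (v n)" if "x (Suc n) > v n" for n
  proof -
    define r where "r = (if snd (S (Suc n)) = Left then Right else Left)"
    have "\<forall>i\<in>{1..Suc n}. snd (S i) = r \<longrightarrow> fst (S i) \<le> v n"
    proof (intro ballI impI)
      fix i assume i: "i \<in> {1..Suc n}" "snd (S i) = r"
      then have "i \<noteq> Suc n" unfolding r_def by (cases "snd (S (Suc n))") auto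
      then show "fst (S i) \<le> v n" using xv[of i n] i unfolding x_def by auto
    qed
    from cost_bound[OF lam t0 S cr this] show ?thesis unfolding T_def x_def by simp
  qed
  define \<Phi> where "\<Phi> = (\<lambda>n. T n - 4 * v n + 2 * t)"
  have Phipos: "\<Phi> n > 0" for n
  proof (induction n)
    case 0 then show ?case using tl lam by (simp add: \<Phi>_def T0 v0)
  next
    case (Suc n)
    show ?case
    proof (cases "x (Suc n) > v n")
      case True
      then have vs: "v (Suc n) = x (Suc n)" by (simp add: vS)
      have c: "T (Suc n) \<le> 8 * max lam (v n)" using CB True by blast
      show ?thesis
      proof (cases "v n \<ge> lam")
        case True
        then show ?thesis using c Suc vs unfolding \<Phi>_def TS by (simp add: max_def)
      next
        case False
        then show ?thesis using c Suc vs Tnn[of n] tl unfolding \<Phi>_def TS by (simp add: max_def)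
      qed
    next
      case False
      then have vs: "v (Suc n) = v n" by (simp add: vS)
      then show ?thesis using Suc xpos[of "Suc n"] t0 unfolding \<Phi>_def TS by simp
    qed
  qed
  have grow: "\<Phi> (Suc n) \<ge> \<Phi> n + min (\<Phi> n) t" if vl: "v n \<ge> lam" for n
  proof (cases "x (Suc n) > v n")
    case True
    then have vs: "v (Suc n) = x (Suc n)" by (simp add: vS)
    have c: "T (Suc n) \<le> 8 * v n" using CB[OF True] vl by (simp add: max_def)
    then show ?thesis using vs unfolding \<Phi>_def TS by (simp add: min_def)
  next
    case False
    then have vs: "v (Suc n) = v n" by (simp add: vS)
    then show ?thesis using xpos[of "Suc n"] t0 unfolding \<Phi>_def TS by (simp add: min_def)
  qed
  obtain n1 where n1: "v n1 \<ge> lam"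
  proof -
    from S obtain i where i: "i \<ge> 1" "fst (S i) > lam" unfolding is_strategy_def by blast
    then have "v i \<ge> lam" using xv[of i i] unfolding x_def by auto
    then show ?thesis using that by blast
  qed
  have vge: "n \<ge> n1 \<Longrightarrow> v n \<ge> lam" for n using vmono[of n1 n] n1 by linarith
  define \<mu> where "\<mu> = min (\<Phi> n1) t"
  have mu: "\<mu> > 0" using Phipos[of n1] tl lam unfolding \<mu>_def by simp
  have lin: "\<Phi> (n1 + k) \<ge> \<Phi> n1 + real k * \<mu>" for k
  proof (induction k)
    case 0 then show ?case by simp
  next
    case (Suc k)
    have "real k * \<mu> \<ge> 0" using mu by simp
    then have "\<Phi> (n1 + k) \<ge> \<Phi> n1" using Suc by linarith
    then have "min (\<Phi> (n1 + k)) t \<ge> \<mu>" unfolding \<mu>_def by (auto simp: min_def)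
    then have m1: "min (\<Phi> (n1 + k)) t \<ge> \<mu>" by simp
    have m2: "\<Phi> (Suc (n1 + k)) \<ge> \<Phi> (n1 + k) + min (\<Phi> (n1 + k)) t"
      using grow[of "n1 + k"] vge[of "n1+k"] by simp
    have "\<Phi> (n1 + Suc k) = \<Phi> (Suc (n1 + k))" by simp
    moreover have "real (Suc k) * \<mu> = real k * \<mu> + \<mu>" by (simp add: algebra_simps)
    ultimately show ?case using Suc.IH m1 m2 by linarith
  qed
  obtain k where k: "t < real k * \<mu>" using ex_less_of_nat_mult[OF mu] by blast
  define N0 where "N0 = n1 + k"
  have PhiN0: "\<Phi> N0 > t" using lin[of k] k Phipos[of n1] unfolding N0_def by simp
  have Phimono: "N0 \<le> n \<Longrightarrow> \<Phi> N0 \<le> \<Phi> n" for n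
  proof (induction n rule: dec_induct)
    case base then show ?case by simp
  next
    case (step n)
    have a: "\<Phi> (Suc n) \<ge> \<Phi> n + min (\<Phi> n) t" using grow vge[of n] step N0_def by simp
    have b: "min (\<Phi> n) t \<ge> 0" using Phipos[of n] t0 by simp
    show ?case using a b step by linarith
  qed
  define P where "P = (\<lambda>n. \<Phi> n - t)"
  define \<rho> where "\<rho> = (\<lambda>n. P n / v n)"
  have Ppos: "n \<ge> N0 \<Longrightarrow> P n > 0" for n using Phimono[of n] PhiN0 unfolding P_def by simp
  have vN: "n \<ge> N0 \<Longrightarrow> v n \<ge> lam" for n using vge N0_def by simp
  have rstep: "\<rho> (Suc n) \<ge> \<rho> n \<and> (x (Suc n) > v n \<longrightarrow> \<rho> n < 2 \<and> \<rho> (Suc n) \<ge> \<rho> n + (\<rho> n)^2/4)"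
    if n: "n \<ge> N0" for n
  proof (cases "x (Suc n) > v n")
    case True
    then have vs: "v (Suc n) = x (Suc n)" by (simp add: vS)
    have vl: "v n \<ge> lam" using vN n by simp
    have c: "T (Suc n) \<le> 8 * v n" using CB[OF True] vl by (simp add: max_def)
    have a1: "x (Suc n) \<le> 2 * v n - P n / 2" using c unfolding P_def \<Phi>_def TS by (simp add: field_simps)
    have a2: "P (Suc n) \<ge> 2 * P n" using c vs t0 unfolding P_def \<Phi>_def TS by simp
    have rs: "P n / v n < 2 \<and> P (Suc n) / x (Suc n) \<ge> P n / v n + (P n / v n)^2/4"
      by (rule ratio_step) (use vl lam True a1 a2 Ppos[OF n] in auto)
    then show ?thesis unfolding \<rho>_def using vs
      by (auto intro: order_trans[OF _ rs[THEN conjunct2]])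
  next
    case False
    then have vs: "v (Suc n) = v n" by (simp add: vS)
    have "P (Suc n) \<ge> P n" using Phimono vs xpos[of "Suc n"] t0 unfolding P_def \<Phi>_def TS by simp
    moreover have "v n > 0" using vN[OF n] lam by simp
    ultimately show ?thesis using False unfolding \<rho>_def vs by (simp add: divide_right_mono)
  qed
  have rmono: "m \<le> n \<Longrightarrow> N0 \<le> m \<Longrightarrow> \<rho> m \<le> \<rho> n" for m n
  proof (induction n rule: dec_induct)
    case base then show ?case by simp
  next
    case (step n) then show ?case using rstep[of n] by simp
  qed
  define r0 where "r0 = \<rho> N0"
  have r0: "r0 > 0" unfolding r0_def \<rho>_def using Ppos[of N0] vN[of N0] lam by simp
  have rec: "\<exists>i\<ge>n. x (Suc i) > v i" for n
  proof (rule ccontr)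
    assume "\<not> ?thesis"
    then have nr: "\<And>i. i \<ge> n \<Longrightarrow> x (Suc i) \<le> v i" by (simp add: not_less)
    have const: "i \<ge> n \<Longrightarrow> v i = v n" for i
    proof (induction i rule: dec_induct)
      case base then show ?case by simp
    next
      case (step i) then show ?case using nr[of i] by (simp add: vS)
    qed
    have all: "x j \<le> v n" if "j \<ge> 1" for j
    proof (cases "j \<le> n")
      case True then show ?thesis using xv that by simp
    next
      case False
      then obtain i where "j = Suc i" "i \<ge> n" by (metis Suc_le_D not_le not_less_eq_eq)
      then show ?thesis using nr[of i] const[of i] by simp
    qed
    from S obtain j where "j \<ge> 1" "fst (S j) > v n" unfolding is_strategy_def by blast
    then show False using all[of j] unfolding x_def by simp
  qed
  have big: "\<exists>n\<ge>N0. \<rho> n \<ge> r0 + real K * r0^2/4" for K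
  proof (induction K)
    case 0 then show ?case unfolding r0_def by auto
  next
    case (Suc K)
    then obtain n where n: "n \<ge> N0" "\<rho> n \<ge> r0 + real K * r0^2/4" by blast
    from rec[of n] obtain i where i: "i \<ge> n" "x (Suc i) > v i" by blast
    have ri: "\<rho> i \<ge> \<rho> n" using rmono[of n i] n i by simp
    have ri0: "\<rho> i \<ge> r0" using rmono[of N0 i] n i unfolding r0_def by simp
    have st: "\<rho> (Suc i) \<ge> \<rho> i + (\<rho> i)^2/4" using rstep[of i] n i by simp
    have "(\<rho> i)^2 \<ge> r0^2" using ri0 r0 by (simp add: power_mono)
    moreover have "real (Suc K) * r0^2/4 = real K * r0^2/4 + r0^2/4" by (simp add: algebra_simps)
    ultimately have "\<rho> (Suc i) \<ge> r0 + real (Suc K) * r0^2/4" using st ri n(2) by linarith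
    then show ?case using n i by (intro exI[of _ "Suc i"]) auto
  qed
  have r02: "r0^2/4 > 0" using r0 by simp
  obtain K where K: "2 < real K * (r0^2/4)" using ex_less_of_nat_mult[OF r02] by blast
  obtain n where n: "n \<ge> N0" "\<rho> n \<ge> r0 + real K * r0^2/4" using big by blast
  from rec[of n] obtain i where i: "i \<ge> n" "x (Suc i) > v i" by blast
  have "\<rho> i \<ge> \<rho> n" using rmono[of n i] n i by simp
  moreover have "\<rho> i < 2" using rstep[of i] n i by simp
  ultimately show False using n K r0 by simp
qed

end
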